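(* Let $r,k\geq 2$ and let $n\geq r+1$ be an integer with $n\nrightarrow(r+1)_k^r$. If a hypergraph $(V,E)$ admits a vertex colouring $V\to\{0,\dots,n-1\}$ under which no hyperedge of size $\geq r+1$ is monochromatic, then there is a colouring of the $r$-subsets of $V$ with $k+f(r)$ colours such that no hyperedge of size $\geq r+1$ is monochromatic (i.e. has all its $r$-subsets of the same colour), where $f(2)=1$, $f(3)=3$, $f(r)=4$ if $r\geq4$ and $r+1$ is prime, and $f(r)=5$ otherwise.
   Context: For $m\in\mathbb N$ write $[m]=\{0,\dots,m-1\}$. The relation $n\to(s)_k^r$ (for $n\geq s>r$, $k\geq2$) means that every colouring of the $r$-element subsets of $[n]$ with $k$ colours has a subset of $[n]$ of size $s$ all of whose $r$-subsets receive the same colour; $n\nrightarrow(s)_k^r$ is its negation. A vertex colouring makes a hyperedge monochromatic if all its vertices get the same colour. *)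

theory Defs
  imports "HOL-Computational_Algebra.Primes"
begin

definition mono_rsets :: "nat \<Rightarrow> ('a set \<Rightarrow> nat) \<Rightarrow> 'a set \<Rightarrow> bool" where
  "mono_rsets r chi H \<longleftrightarrow> (\<exists>c. \<forall>S. S \<subseteq> H \<and> card S = r \<longrightarrow> chi S = c)"

text \<open>The partition relation n -> (s)^r_k on [n] = {0..<n}.\<close>
definition arrows :: "nat \<Rightarrow> nat \<Rightarrow> nat \<Rightarrow> nat \<Rightarrow> bool" where
  "arrows n s k r \<longleftrightarrow>
     (\<forall>chi :: nat set \<Rightarrow> nat.
        (\<forall>S. S \<subseteq> {..<n} \<and> card S = r \<longrightarrow> chi S < k) \<longrightarrow>
        (\<exists>H. H \<subseteq> {..<n} \<and> card H = s \<and> mono_rsets r chi H))"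

definition size_ge :: "nat \<Rightarrow> 'a set \<Rightarrow> bool" where
  "size_ge m e \<longleftrightarrow> infinite e \<or> m \<le> card e"

definition fcol :: "nat \<Rightarrow> nat" where
  "fcol r = (if r = 2 then 1 else if r = 3 then 3 else if prime (r + 1) then 4 else 5)"

end

theory Submission
  imports Defs
begin

definition code :: "nat \<Rightarrow> ('a \<Rightarrow> nat) \<Rightarrow> 'a set \<Rightarrow> nat" where
  "code r c S = (if r = 2 then 0 else 2 * (card (c ` S) mod 2) +
      ((card (c ` S) + card {x\<in>S. c x = Min (c ` S)}) mod 2))"

lemma ar: assumes "2*((a::nat) mod 2) + (a+b) mod 2 = 2*(a' mod 2)+(a'+b') mod 2"
  shows "a mod 2 = a' mod 2 \<and> b mod 2 = b' mod 2"
proof -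
  have h: "(a+b) mod 2 = (a mod 2 + b mod 2) mod 2" "(a'+b') mod 2 = (a' mod 2 + b' mod 2) mod 2"
    by (simp_all add: mod_add_eq)
  have p: "a mod 2 = 0 \<or> a mod 2 = 1" "b mod 2 = 0 \<or> b mod 2 = 1" "a' mod 2 = 0 \<or> a' mod 2 = 1" "b' mod 2 = 0 \<or> b' mod 2 = 1"
    by auto
  show ?thesis using assms h p by auto
qed
lemma par1: "(m::nat) \<ge> 1 \<Longrightarrow> (m - 1) mod 2 \<noteq> m mod 2"
  by (cases m) (auto simp: mod_Suc)

lemma code_eqD:
  assumes "r \<noteq> 2" "code r c S = code r c T"
  shows "card (c ` S) mod 2 = card (c ` T) mod 2"
    and "card {x\<in>S. c x = Min (c ` S)} mod 2 = card {x\<in>T. c x = Min (c ` T)} mod 2"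
proof -
  have "2 * (card (c ` S) mod 2) + (card (c ` S) + card {x\<in>S. c x = Min (c ` S)}) mod 2 =
        2 * (card (c ` T) mod 2) + (card (c ` T) + card {x\<in>T. c x = Min (c ` T)}) mod 2"
    using assms unfolding code_def by simp
  from ar[OF this] show "card (c ` S) mod 2 = card (c ` T) mod 2"
    and "card {x\<in>S. c x = Min (c ` S)} mod 2 = card {x\<in>T. c x = Min (c ` T)} mod 2" by blast+
qed

lemma code_lt:
  assumes "card S = r" "r \<ge> 2" "\<not> inj_on c S"
  shows "code r c S < fcol r"
proof -
  have fin: "finite S" using assms card.infinite by fastforce
  consider "r = 2" | "r = 3" | "r \<ge> 4" using assms by linarith
  then show ?thesis
  proof cases
    case 1 then show ?thesis by (simp add: code_def fcol_def)
  next
    case 2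
    have "card (c ` S) \<noteq> card S" using inj_on_iff_eq_card[OF fin, of c] assms(3) by blast
    moreover have "card (c ` S) \<le> card S" using card_image_le[OF fin] by blast
    ultimately have lt: "card (c ` S) < card S" by linarith
    have ne: "S \<noteq> {}" using assms by auto
    have ge: "card (c ` S) \<ge> 1" using fin ne by (simp add: Suc_le_eq card_gt_0_iff)
    show ?thesis
    proof (cases "card (c ` S) = 1")
      case True
      then obtain t where t: "c ` S = {t}" using card_1_singletonE by blast
      then have "{x\<in>S. c x = Min (c ` S)} = S" by auto
      then show ?thesis using True 2 assms by (simp add: code_def fcol_def)
    next
      case False
      then have "card (c ` S) = 2" using lt ge 2 assms by linarith
      then show ?thesis using 2 by (simp add: code_def fcol_def)
    qed
  next
    case 3
    have "code r c S < 4" unfolding code_def by auto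
    moreover have "fcol r \<ge> 4" using 3 by (simp add: fcol_def)
    ultimately show ?thesis by linarith
  qed
qed

lemma img_dup: "(\<exists>z\<in>e. z \<noteq> x \<and> c z = c x) \<Longrightarrow> c ` (e - {x}) = c ` e"
  by (auto simp: image_iff) (metis DiffI empty_iff insert_iff)

lemma img_nodup: "x \<in> e \<Longrightarrow> \<not> (\<exists>z\<in>e. z \<noteq> x \<and> c z = c x) \<Longrightarrow> c ` (e - {x}) = c ` e - {c x}"
  by auto

lemma comb:
  assumes fin: "finite e" and r3: "r \<ge> 3" and ce: "card e = r + 1"
    and uw: "u \<in> e" "w \<in> e" "c u \<noteq> c w"
    and ni: "\<forall>x\<in>e. \<not> inj_on c (e - {x})"
  shows "\<exists>x\<in>e. \<exists>y\<in>e. code r c (e - {x}) \<noteq> code r c (e - {y})"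
proof -
  define dup where "dup x = (\<exists>z\<in>e. z \<noteq> x \<and> c z = c x)" for x
  have r2: "r \<noteq> 2" using r3 by auto
  have m1: "card (c ` e) \<ge> 1" using uw fin by (auto simp add: Suc_le_eq card_gt_0_iff)
  consider "\<exists>x\<in>e. \<not> dup x" "\<exists>y\<in>e. dup y" | "\<forall>x\<in>e. \<not> dup x" | "\<forall>x\<in>e. dup x" by blast
  then show ?thesis
  proof cases
    case 1
    then obtain x y where x: "x \<in> e" "\<not> dup x" and y: "y \<in> e" "dup y" by blast
    have "c ` (e - {x}) = c ` e - {c x}"
      using img_nodup[of x e c] x(1) x(2) unfolding dup_def by blast
    then have cx: "card (c ` (e - {x})) = card (c ` e) - 1" using x fin by simp
    have cy: "card (c ` (e - {y})) = card (c ` e)"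
      using img_dup[of e y c] y(2) unfolding dup_def by simp
    have ne: "card (c ` (e - {x})) mod 2 \<noteq> card (c ` (e - {y})) mod 2"
      using cx cy par1[OF m1] by simp
    have "code r c (e - {x}) \<noteq> code r c (e - {y})"
    proof
      assume "code r c (e - {x}) = code r c (e - {y})"
      from code_eqD(1)[OF r2 this] ne show False by simp
    qed
    then show ?thesis using x(1) y(1) by blast
  next
    case 2
    have inj: "inj_on c e" unfolding inj_on_def
    proof (intro ballI impI)
      fix a b assume ab: "a \<in> e" "b \<in> e" "c a = c b"
      show "a = b"
      proof (rule ccontr)
        assume "a \<noteq> b"
        then have "dup a" unfolding dup_def using ab by metis
        then show False using 2 ab(1) by blast
      qed
    qed
    have "inj_on c (e - {u})" using inj_on_subset[OF inj Diff_subset] .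
    then have False using ni uw(1) by blast
    then show ?thesis ..
  next
    case 3
    have img: "c ` (e - {x}) = c ` e" if "x \<in> e" for x
      using img_dup[of e x c] 3 that unfolding dup_def by blast
    define v where "v = Min (c ` e)"
    have vin: "v \<in> c ` e" unfolding v_def using fin uw(1) by (intro Min_in) auto
    then obtain x where x: "x \<in> e" "c x = v" by auto
    obtain y where y: "y \<in> e" "c y \<noteq> v" using uw by (cases "c u = v") auto
    define C where "C = {z\<in>e. c z = v}"
    have finC: "finite C" using fin unfolding C_def by simp
    have xC: "x \<in> C" using x unfolding C_def by simp
    have Mx: "Min (c ` (e - {x})) = v" using img[OF x(1)] unfolding v_def by simp
    have My: "Min (c ` (e - {y})) = v" using img[OF y(1)] unfolding v_def by simp
    have Gx: "{z\<in>e - {x}. c z = Min (c ` (e - {x}))} = C - {x}"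
      unfolding Mx C_def by blast
    have Gy: "{z\<in>e - {y}. c z = Min (c ` (e - {y}))} = C"
      unfolding My C_def using y(2) by blast
    have "card (C - {x}) = card C - 1" using xC finC by simp
    moreover have "card C \<ge> 1" using xC finC by (simp add: Suc_le_eq card_gt_0_iff) blast
    ultimately have ne: "card (C - {x}) mod 2 \<noteq> card C mod 2" using par1 by simp
    have "code r c (e - {x}) \<noteq> code r c (e - {y})"
    proof
      assume "code r c (e - {x}) = code r c (e - {y})"
      from code_eqD(2)[OF r2 this] ne Gx Gy show False by simp
    qed
    then show ?thesis using x(1) y(1) by blast
  qed
qed

lemma sub_card:
  assumes "u \<in> e" "w \<in> e" "u \<noteq> w" "size_ge m e" "m \<ge> 2"
  shows "\<exists>e'. e' \<subseteq> e \<and> finite e' \<and> card e' = m \<and> u \<in> e' \<and> w \<in> e'"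
proof -
  have uw: "{u, w} \<subseteq> e" "card {u, w} = 2" using assms by auto
  obtain D where D: "D \<subseteq> e - {u, w}" "card D = m - 2" "finite D"
  proof (cases "finite e")
    case True
    then have "card e \<ge> m" using assms(4) unfolding size_ge_def by blast
    then have "card (e - {u, w}) \<ge> m - 2" using uw True by (simp add: card_Diff_subset)
    then obtain D where "D \<subseteq> e - {u, w}" "card D = m - 2" "finite D"
      by (rule obtain_subset_with_card_n)
    then show ?thesis using that by blast
  next
    case False
    then have "infinite (e - {u, w})" by simp
    then obtain D where "finite D" "card D = m - 2" "D \<subseteq> e - {u, w}"
      using infinite_arbitrarily_large by blast
    then show ?thesis using that by blast
  qed
  then have "u \<notin> insert w D" "w \<notin> D" using assms by auto
  then have "card (insert u (insert w D)) = m" using assms D by simp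
  then show ?thesis using D assms by (intro exI[of _ "insert u (insert w D)"]) auto
qed

theorem theorem4p3:
  fixes V :: "'a set" and E :: "'a set set" and r k n :: nat
  assumes "r \<ge> 2" and "k \<ge> 2" and "n \<ge> r + 1"
    and "\<not> arrows n (r + 1) k r"
    and "\<forall>e\<in>E. e \<subseteq> V"
    and "\<exists>c :: 'a \<Rightarrow> nat. (\<forall>v\<in>V. c v < n) \<and>
           (\<forall>e\<in>E. size_ge (r + 1) e \<longrightarrow> \<not> (\<exists>i. \<forall>v\<in>e. c v = i))"
  shows "\<exists>chi :: 'a set \<Rightarrow> nat.
           (\<forall>S. S \<subseteq> V \<and> card S = r \<longrightarrow> chi S < k + fcol r) \<and>
           (\<forall>e\<in>E. size_ge (r + 1) e \<longrightarrow> \<not> mono_rsets r chi e)"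
proof -
  obtain c :: "'a \<Rightarrow> nat" where cV: "\<forall>v\<in>V. c v < n"
    and cE: "\<forall>e\<in>E. size_ge (r + 1) e \<longrightarrow> \<not> (\<exists>i. \<forall>v\<in>e. c v = i)"
    using assms(6) by blast
  obtain chi0 :: "nat set \<Rightarrow> nat" where chi0k: "\<forall>S. S \<subseteq> {..<n} \<and> card S = r \<longrightarrow> chi0 S < k"
    and chi0m: "\<not> (\<exists>H. H \<subseteq> {..<n} \<and> card H = r + 1 \<and> mono_rsets r chi0 H)"
  proof -
    have "\<not> (\<forall>chi :: nat set \<Rightarrow> nat.
        (\<forall>S. S \<subseteq> {..<n} \<and> card S = r \<longrightarrow> chi S < k) \<longrightarrow>
        (\<exists>H. H \<subseteq> {..<n} \<and> card H = r + 1 \<and> mono_rsets r chi H))"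
      using assms(4) unfolding arrows_def .
    then show ?thesis using that by blast
  qed
  define chi where "chi S = (if inj_on c S then chi0 (c ` S) else k + code r c S)" for S
  have P1: "\<forall>S. S \<subseteq> V \<and> card S = r \<longrightarrow> chi S < k + fcol r"
  proof (intro allI impI)
    fix S assume S: "S \<subseteq> V \<and> card S = r"
    show "chi S < k + fcol r"
    proof (cases "inj_on c S")
      case True
      have "c ` S \<subseteq> {..<n}" using S cV by force
      moreover have "card (c ` S) = r" using True S by (simp add: card_image)
      ultimately have "chi0 (c ` S) < k" using chi0k by blast
      then show ?thesis using True unfolding chi_def by simp
    next
      case False
      then show ?thesis using code_lt[of S r c] S assms(1) unfolding chi_def by simp
    qed
  qed
  have P2: "\<not> mono_rsets r chi e" if eE: "e \<in> E" and sz: "size_ge (r + 1) e" for e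
  proof
    assume "mono_rsets r chi e"
    then obtain col where col0: "\<forall>S. S \<subseteq> e \<and> card S = r \<longrightarrow> chi S = col"
      unfolding mono_rsets_def by blast
    have nc: "\<not> (\<exists>i. \<forall>v\<in>e. c v = i)" using cE eE sz by blast
    have "e \<noteq> {}" using sz assms(1) unfolding size_ge_def by auto
    then obtain u where u: "u \<in> e" by blast
    have "\<not> (\<forall>v\<in>e. c v = c u)" using nc by blast
    then obtain w where w: "w \<in> e" "c w \<noteq> c u" by blast
    then have uw: "u \<noteq> w" by auto
    have r12: "r + 1 \<ge> 2" using assms(1) by simp
    from sub_card[OF u w(1) uw sz r12]
    obtain e' where e': "e' \<subseteq> e" "finite e'" "card e' = r + 1" "u \<in> e'" "w \<in> e'"
      by blast
    have cd: "card (e' - {x}) = r" if "x \<in> e'" for x using that e'(2,3) by simp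
    have colx: "chi (e' - {x}) = col" if "x \<in> e'" for x
    proof -
      have "e' - {x} \<subseteq> e" using e'(1) by blast
      then show ?thesis using col0 cd[OF that] by blast
    qed
    show False
    proof (cases "\<exists>x\<in>e'. inj_on c (e' - {x})")
      case True
      then obtain x where x: "x \<in> e'" "inj_on c (e' - {x})" by blast
      have "e' \<subseteq> V" using e'(1) eE assms(5) by blast
      then have "c ` (e' - {x}) \<subseteq> {..<n}" using cV by force
      moreover have "card (c ` (e' - {x})) = r" using x cd by (simp add: card_image)
      ultimately have "col < k" using colx[OF x(1)] x chi0k unfolding chi_def by auto
      then have allinj: "inj_on c (e' - {z})" if "z \<in> e'" for z
        using colx[OF that] unfolding chi_def by (auto split: if_splits)
      have inj: "inj_on c e'"
        unfolding inj_on_def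
      proof (intro ballI impI)
        fix a b assume ab: "a \<in> e'" "b \<in> e'" "c a = c b"
        have c2: "card {a, b} \<le> 2" by (simp add: card_insert_if)
        have "card e' - card {a, b} \<le> card (e' - {a, b})"
          by (rule diff_card_le_card_Diff) simp
        then have "card (e' - {a, b}) \<ge> r - 1" using e' c2 by linarith
        then have "card (e' - {a, b}) \<noteq> 0" using assms(1) by linarith
        then have "e' - {a, b} \<noteq> {}" by (metis card.empty)
        then obtain z where z: "z \<in> e'" "z \<noteq> a" "z \<noteq> b" by blast
        then show "a = b" using allinj[OF z(1)] ab unfolding inj_on_def by blast
      qed
      define H where "H = c ` e'"
      have H1: "H \<subseteq> {..<n}" unfolding H_def using cV \<open>e' \<subseteq> V\<close> by force
      have H2: "card H = r + 1" unfolding H_def using inj e' by (simp add: card_image)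
      have "mono_rsets r chi0 H" unfolding mono_rsets_def
      proof (intro exI allI impI)
        fix T assume T: "T \<subseteq> H \<and> card T = r"
        have fH: "finite H" unfolding H_def using e' by simp
        have fT: "finite T" using T fH finite_subset by blast
        have "card (H - T) = card H - card T" using T fT by (simp add: card_Diff_subset)
        then have "card (H - T) = 1" using T H2 by simp
        then obtain h where h: "H - T = {h}" using card_1_singletonE by blast
        then have hT: "T = H - {h}" using T by blast
        obtain z where z: "z \<in> e'" "h = c z" using h unfolding H_def by blast
        have "c ` (e' - {z}) = T" using hT z inj unfolding H_def
          by (auto simp: inj_on_def)
        then show "chi0 T = col" using colx[OF z(1)] allinj[OF z(1)] unfolding chi_def by simp
      qed
      then show False using chi0m H1 H2 by blast
    next
      case False
      then have ni: "\<forall>x\<in>e'. \<not> inj_on c (e' - {x})" by blast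
      show False
      proof (cases "r = 2")
        case True
        have "card (e' - {u, w}) = 1" using e' uw True by (simp add: card_Diff_subset)
        then obtain z where z: "e' - {u, w} = {z}" using card_1_singletonE by blast
        then have "e' - {z} = {u, w}" using e' by auto
        moreover have "inj_on c {u, w}" using w by auto
        moreover have "z \<in> e'" using z by auto
        ultimately show False using ni by force
      next
        case False
        then have r3: "r \<ge> 3" using assms(1) by auto
        obtain x y where xy: "x \<in> e'" "y \<in> e'" "code r c (e' - {x}) \<noteq> code r c (e' - {y})"
          using comb[OF e'(2) r3 e'(3) e'(4) e'(5) _ ni] w(2) by auto
        then show False using colx[OF xy(1)] colx[OF xy(2)] ni unfolding chi_def by auto
      qed
    qed
  qed
  show ?thesis using P1 P2 by blast
qed

end
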